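(* Let $k$ be an odd positive integer, let $D=k^2+1$ and $n=k^2$. Suppose $(a,b)$ and $(a',b')$ are two primitive solutions (i.e. $\gcd(a,b)=\gcd(a',b')=1$) of $X^2-DY^2=n$ such that $(a,b)$ is equivalent neither to $(a',b')$ nor to $(a',-b')$. Then there exist coprime integers $p,q$, both greater than $1$, with $k=pq$, such that both $p^4$ and $q^4$ are primitively represented by the form $X^2-DY^2$, i.e. there are coprime integers $u_1,v_1$ with $u_1^2-Dv_1^2=p^4$ and coprime integers $u_2,v_2$ with $u_2^2-Dv_2^2=q^4$.
   Context: Two solutions $(x,y)$ and $(x',y')$ of $X^2-DY^2=n$ are called equivalent if $xx'\equiv Dyy' \pmod{n}$ and $xy'\equiv yx'\pmod{n}$. *)

theory Defs
  imports "HOL-Number_Theory.Number_Theory"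
begin

definition pell_sol :: "int \<Rightarrow> int \<Rightarrow> int \<Rightarrow> int \<Rightarrow> bool" where
  "pell_sol D n x y \<longleftrightarrow> x^2 - D * y^2 = n"

definition pell_equiv :: "int \<Rightarrow> int \<Rightarrow> int \<times> int \<Rightarrow> int \<times> int \<Rightarrow> bool" where
  "pell_equiv D n s t \<longleftrightarrow>
     [fst s * fst t = D * snd s * snd t] (mod n) \<and>
     [fst s * snd t = snd s * fst t] (mod n)"

end

theory Submission
  imports Defs "HOL-Computational_Algebra.Nth_Powers"
begin

lemma rep_lemma:
  fixes D X Y g h :: int
  assumes e: "X^2 - D*Y^2 = (g*h)^4" and gx: "g^2 dvd X" and gy: "g^2 dvd Y"
    and g0: "g \<noteq> 0" and cp: "coprime (Y div g^2) h"
  shows "\<exists>u v. coprime u v \<and> u^2 - D*v^2 = h^4"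
proof -
  obtain X1 where X: "X = g^2*X1" using gx by blast
  obtain Y1 where Y: "Y = g^2*Y1" using gy by blast
  have Y1: "Y div g^2 = Y1" using Y g0 by simp
  have "g^4 * (X1^2 - D*Y1^2) = X^2 - D*Y^2" unfolding X Y by (simp add: algebra_simps power_mult_distrib power_mult[symmetric])
  also have "\<dots> = g^4 * h^4" using e by (simp add: power_mult_distrib)
  finally have "g^4 * (X1^2 - D*Y1^2) = g^4 * h^4" .
  then have eq: "X1^2 - D*Y1^2 = h^4" using g0 by simp
  have "coprime X1 Y1"
  proof (rule coprimeI)
    fix c assume c1: "c dvd X1" and c2: "c dvd Y1"
    have "c dvd X1^2 - D*Y1^2" using c1 c2 by (simp add: power2_eq_square)
    then have "c dvd h^4" using eq by simp
    moreover have "coprime c h" using coprime_divisors[OF _ dvd_refl cp] c2 Y1 by simp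
    then have "coprime c (h^4)" by simp
    ultimately show "is_unit c" by (meson coprime_common_divisor dvd_refl)
  qed
  then show ?thesis using eq by blast
qed

theorem lemma4p3:
  fixes k :: int and a b a' b' :: int
  assumes "k > 0" and "odd k"
    and "pell_sol (k^2 + 1) (k^2) a b" and "coprime a b"
    and "pell_sol (k^2 + 1) (k^2) a' b'" and "coprime a' b'"
    and "\<not> pell_equiv (k^2 + 1) (k^2) (a, b) (a', b')"
    and "\<not> pell_equiv (k^2 + 1) (k^2) (a, b) (a', - b')"
  shows "\<exists>p q :: int. p > 1 \<and> q > 1 \<and> coprime p q \<and> k = p * q \<and>
           (\<exists>u1 v1. coprime u1 v1 \<and> u1^2 - (k^2 + 1) * v1^2 = p^4) \<and>
           (\<exists>u2 v2. coprime u2 v2 \<and> u2^2 - (k^2 + 1) * v2^2 = q^4)"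
proof -
  define D where "D = k^2 + 1"
  have s1: "a^2 - D*b^2 = k^2" using assms(3) by (simp add: pell_sol_def D_def)
  have s2: "a'^2 - D*b'^2 = k^2" using assms(5) by (simp add: pell_sol_def D_def)
  have cpa: "coprime k a" if "a^2 - D*b^2 = k^2" "coprime a b" for a b
  proof (rule coprimeI)
    fix d assume d1: "d dvd k" and d2: "d dvd a"
    have "d dvd a^2 - k^2" using d1 d2 by (simp add: power2_eq_square)
    then have "d dvd D*b^2" using that(1) by (metis add_diff_cancel_left' diff_add_cancel)
    moreover have "coprime d D"
    proof (rule coprimeI)
      fix c assume "c dvd d" "c dvd D"
      then have "c dvd D - k*k" using d1 by (meson dvd_diff dvd_mult2 dvd_trans)
      then show "is_unit c" by (simp add: D_def power2_eq_square)
    qed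
    ultimately have "d dvd b^2" using coprime_dvd_mult_right_iff by blast
    moreover have "coprime d (b^2)" using coprime_divisors[OF d2 dvd_refl] that(2) by simp
    ultimately show "is_unit d" by (meson coprime_common_divisor dvd_refl)
  qed
  have cpb: "coprime k b" if "a^2 - D*b^2 = k^2" "coprime a b" for a b
  proof (rule coprimeI)
    fix d assume d1: "d dvd k" and d2: "d dvd b"
    have "d dvd k^2 + D*b^2" using d1 d2 by (simp add: power2_eq_square)
    then have "d dvd a^2" using that(1) by (metis diff_add_cancel)
    moreover have "coprime (a^2) d" using coprime_divisors[OF dvd_refl d2] that(2) by simp
    ultimately show "is_unit d" by (meson coprime_common_divisor dvd_refl)
  qed
  have ka: "coprime k a" and kb: "coprime k b" and ka': "coprime k a'" and kb': "coprime k b'"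
    using cpa cpb s1 s2 assms(4,6) by auto
  define X where "X = a*a' - D*b*b'"
  define Y where "Y = a*b' - b*a'"
  define X' where "X' = a*a' + D*b*b'"
  define Y' where "Y' = a*b' + b*a'"
  have nX: "X^2 - D*Y^2 = (a^2-D*b^2)*(a'^2-D*b'^2)"
    unfolding X_def Y_def by (simp add: power2_eq_square algebra_simps)
  have nX': "X'^2 - D*Y'^2 = (a^2-D*b^2)*(a'^2-D*b'^2)"
    unfolding X'_def Y'_def by (simp add: power2_eq_square algebra_simps)
  have k4: "(a^2-D*b^2)*(a'^2-D*b'^2) = k^4" using s1 s2 by simp
  have YY: "Y*Y' = a^2*b'^2 - b^2*a'^2"
    unfolding Y_def Y'_def by (simp add: power2_eq_square algebra_simps)
  also have "\<dots> = k^2*(b'^2 - b^2)"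
  proof -
    have "a^2 = k^2 + D*b^2" "a'^2 = k^2 + D*b'^2" using s1 s2 by auto
    then show ?thesis by (simp add: algebra_simps)
  qed
  finally have YY: "k^2 dvd Y*Y'" by simp
  have aX: "a*X = k^2*a' - D*b*Y"
  proof -
    have "a*X - (k^2*a' - D*b*Y) = a'*(a^2 - D*b^2 - k^2)"
      unfolding X_def Y_def by (simp add: power2_eq_square algebra_simps)
    then show ?thesis using s1 by simp
  qed
  have aX': "a*X' = k^2*a' + D*b*Y'"
  proof -
    have "a*X' - (k^2*a' + D*b*Y') = a'*(a^2 - D*b^2 - k^2)"
      unfolding X'_def Y'_def by (simp add: power2_eq_square algebra_simps)
    then show ?thesis using s1 by simp
  qed
  have common: "is_unit d" if "d dvd k^2" "d dvd Y" "d dvd Y'" for d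
  proof -
    have "d dvd Y + Y'" using that by simp
    then have "d dvd 2*(a*b')" by (simp add: Y_def Y'_def)
    moreover have "coprime (k^2) (2*(a*b'))"
      using ka kb' assms(2) by (simp add: coprime_commute)
    then have "coprime d (2*(a*b'))" using coprime_divisors[OF that(1) dvd_refl] by blast
    ultimately show ?thesis by (meson coprime_common_divisor dvd_refl)
  qed
  define G where "G = gcd (k^2) Y"
  define H where "H = gcd (k^2) Y'"
  have Gp: "G > 0" and Hp: "H > 0" using assms(1) by (auto simp: G_def H_def)
  have cGH: "coprime G H"
    by (rule coprimeI) (metis G_def H_def common dvd_trans gcd_dvd1 gcd_dvd2)
  have "G*H dvd k^2" using cGH by (simp add: G_def H_def divides_mult)
  moreover have "k^2 dvd G*H"
  proof -
    have "G*H = gcd (G*k^2) (G*Y')" using Gp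
      by (metis H_def gcd_mult_distrib_int abs_of_pos)
    moreover have "k^2 dvd G*Y'"
    proof -
      have "\<bar>Y'\<bar>*G = gcd (Y'*k^2) (Y'*Y)" unfolding G_def by (rule gcd_mult_distrib_int)
      moreover have "k^2 dvd gcd (Y'*k^2) (Y'*Y)" using YY by (simp add: mult.commute)
      ultimately have "k^2 dvd \<bar>Y'\<bar>*G" by simp
      then have "k^2 dvd \<bar>Y'*G\<bar>" using Gp by (simp add: abs_mult)
      then show ?thesis by (simp add: mult.commute)
    qed
    ultimately show ?thesis by simp
  qed
  ultimately have kGH: "k^2 = G*H" using Gp Hp by (simp add: zdvd_antisym_nonneg)
  have cn: "coprime (nat G) (nat H)" using cGH Gp Hp
    by (metis coprime_int_iff int_nat_eq less_le)
  have pn: "is_nth_power 2 (nat G * nat H)"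
    using kGH Gp Hp assms(1) unfolding is_nth_power_def
    by (metis nat_mult_distrib nat_power_eq less_le)
  obtain g0 where g0: "nat G = g0^2"
    using is_nth_power_mult_coprime_natD(1)[OF cn pn] Gp Hp by (auto simp: is_nth_power_def)
  obtain h0 where h0: "nat H = h0^2"
    using is_nth_power_mult_coprime_natD(2)[OF cn pn] Gp Hp by (auto simp: is_nth_power_def)
  define g where "g = int g0"
  define h where "h = int h0"
  have Gg: "G = g^2" using g0 Gp unfolding g_def by (metis int_nat_eq of_nat_power less_le)
  have Hh: "H = h^2" using h0 Hp unfolding h_def by (metis int_nat_eq of_nat_power less_le)
  have gp: "g > 0" using Gg Gp g_def by (metis of_nat_0_le_iff less_le power_zero_numeral zero_less_numeral)
  have hp: "h > 0" using Hh Hp h_def by (metis of_nat_0_le_iff less_le power_zero_numeral zero_less_numeral)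
  have kgh: "k = g*h"
  proof -
    have "k^2 = (g*h)^2" using kGH Gg Hh by (simp add: power_mult_distrib)
    then show ?thesis using gp hp assms(1) by (simp add: power2_eq_iff_nonneg)
  qed
  have cgh: "coprime g h" using cGH Gg Hh by simp
  have gY: "g^2 dvd Y" and gk: "g^2 dvd k^2" using Gg G_def by (metis gcd_dvd2, metis gcd_dvd1)
  have hY: "h^2 dvd Y'" and hk: "h^2 dvd k^2" using Hh H_def by (metis gcd_dvd2, metis gcd_dvd1)
  have gX: "g^2 dvd X"
  proof -
    have "g^2 dvd a*X" unfolding aX using gY gk by simp
    moreover have "coprime (g^2) a" using coprime_divisors[OF gk dvd_refl] ka by simp
    ultimately show ?thesis using coprime_dvd_mult_right_iff by blast
  qed
  have hX: "h^2 dvd X'"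
  proof -
    have "h^2 dvd a*X'" unfolding aX' using hY hk by simp
    moreover have "coprime (h^2) a" using coprime_divisors[OF hk dvd_refl] ka by simp
    ultimately show ?thesis using coprime_dvd_mult_right_iff by blast
  qed
  have r1: "\<exists>u v. coprime u v \<and> u^2 - D*v^2 = h^4"
  proof (rule rep_lemma[of X D Y g])
    show "X^2 - D*Y^2 = (g*h)^4" using nX k4 kgh by simp
    show "coprime (Y div g^2) h"
    proof (rule coprimeI)
      fix c assume c1: "c dvd Y div g^2" and c2: "c dvd h"
      have "c dvd Y" using c1 gY by (metis dvd_div_mult_self dvd_mult2)
      moreover have "c dvd Y'" using c2 hY by (meson dvd_power dvd_trans zero_less_numeral)
      moreover have "c dvd k^2" using c2 kgh by (simp add: power2_eq_square)
      ultimately show "is_unit c" using common by blast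
    qed
  qed (use gX gY gp in auto)
  have r2: "\<exists>u v. coprime u v \<and> u^2 - D*v^2 = g^4"
  proof (rule rep_lemma[of X' D Y' h])
    show "X'^2 - D*Y'^2 = (h*g)^4" using nX' k4 kgh by (simp add: mult.commute)
    show "coprime (Y' div h^2) g"
    proof (rule coprimeI)
      fix c assume c1: "c dvd Y' div h^2" and c2: "c dvd g"
      have "c dvd Y'" using c1 hY by (metis dvd_div_mult_self dvd_mult2)
      moreover have "c dvd Y" using c2 gY by (meson dvd_power dvd_trans zero_less_numeral)
      moreover have "c dvd k^2" using c2 kgh by (simp add: power2_eq_square)
      ultimately show "is_unit c" using common by blast
    qed
  qed (use hX hY hp in auto)
  have g1: "g \<noteq> 1"
  proof
    assume "g = 1"
    then have "H = k^2" using kGH Gg by simp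
    then have kY: "k^2 dvd Y'" using H_def by (metis gcd_dvd2)
    have kX: "k^2 dvd X'"
    proof -
      have "k^2 dvd a*X'" unfolding aX' using kY by simp
      moreover have "coprime (k^2) a" using ka by simp
      ultimately show ?thesis using coprime_dvd_mult_right_iff by blast
    qed
    have "pell_equiv (k^2 + 1) (k^2) (a, b) (a', - b')"
    proof -
      have "a * a' - (k\<^sup>2 + 1) * b * - b' = X'" by (simp add: X'_def D_def)
      moreover have "a * - b' - b * a' = - Y'" by (simp add: Y'_def)
      ultimately show ?thesis using kX kY unfolding pell_equiv_def cong_iff_dvd_diff by simp
    qed
    then show False using assms(8) by simp
  qed
  have h1: "h \<noteq> 1"
  proof
    assume "h = 1"
    then have "G = k^2" using kGH Hh by simp
    then have kY: "k^2 dvd Y" using G_def by (metis gcd_dvd2)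
    have kX: "k^2 dvd X"
    proof -
      have "k^2 dvd a*X" unfolding aX using kY by simp
      moreover have "coprime (k^2) a" using ka by simp
      ultimately show ?thesis using coprime_dvd_mult_right_iff by blast
    qed
    have "pell_equiv (k^2 + 1) (k^2) (a, b) (a', b')"
    proof -
      have "a * a' - (k\<^sup>2 + 1) * b * b' = X" by (simp add: X_def D_def)
      moreover have "a * b' - b * a' = Y" by (simp add: Y_def)
      ultimately show ?thesis using kX kY unfolding pell_equiv_def cong_iff_dvd_diff by simp
    qed
    then show False using assms(7) by simp
  qed
  show ?thesis
    using r1 r2 g1 h1 gp hp cgh kgh unfolding D_def
    by (intro exI[of _ g] exI[of _ h]) auto
qed

end
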